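(* For all positive integers $t,n_s,n_b,K,|\Pi|$, all $\epsilon\in(0,1]$, $\delta\in(0,1)$, $\alpha>0$ and $\Delta\ge 0$, $$\min_{\lambda\in\{0,1\}}G_t(\lambda,\alpha,\Delta)\ \le\ \sqrt{2}\,\min_{\lambda\in[0,1]}G_t(\lambda,\alpha,\Delta).$$
   Context: Here $K$ is the number of actions, $|\Pi|$ the size of a finite policy class, $n_s$ the number of warm-start examples, $n_b$ the number of interaction rounds, $\epsilon$ an exploration parameter and $\delta$ a confidence parameter. Writing $L=\ln\frac{8n_b|\Pi|}{\delta}$, define for $\lambda\in[0,1]$ $$V_t(\lambda)=2\sqrt{\Big(\lambda^2\frac{Kt}{\epsilon}+(1-\lambda)^2n_s\Big)L}+\Big(\frac{\lambda K}{\epsilon}+(1-\lambda)\Big)L,$$ $$G_t(\lambda,\alpha,\Delta)=\frac{(1-\lambda)n_s\Delta+2V_t(\lambda)}{\lambda t+(1-\lambda)n_s\alpha}.$$ *)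

theory Defs
  imports Complex_Main
begin

text \<open>L = ln (8 n_b |Pi| / delta); Pi is the size of the finite policy class.\<close>
definition Lconst :: "nat \<Rightarrow> nat \<Rightarrow> real \<Rightarrow> real" where
  "Lconst nb Pi \<delta> = ln (8 * real nb * real Pi / \<delta>)"

definition Vt :: "nat \<Rightarrow> nat \<Rightarrow> nat \<Rightarrow> nat \<Rightarrow> nat \<Rightarrow> real \<Rightarrow> real \<Rightarrow> real \<Rightarrow> real" where
  "Vt K Pi ns nb t \<epsilon> \<delta> lam = (let L = Lconst nb Pi \<delta> in
     2 * sqrt ((lam\<^sup>2 * real K * real t / \<epsilon> + (1 - lam)\<^sup>2 * real ns) * L)
     + (lam * real K / \<epsilon> + (1 - lam)) * L)"

definition Gt :: "nat \<Rightarrow> nat \<Rightarrow> nat \<Rightarrow> nat \<Rightarrow> nat \<Rightarrow> real \<Rightarrow> real \<Rightarrow> real \<Rightarrow> real \<Rightarrow> real \<Rightarrow> real" where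
  "Gt K Pi ns nb t \<epsilon> \<delta> lam \<alpha> \<Delta> =
     ((1 - lam) * real ns * \<Delta> + 2 * Vt K Pi ns nb t \<epsilon> \<delta> lam)
     / (lam * real t + (1 - lam) * real ns * \<alpha>)"

end

theory Submission
  imports Defs
begin

lemma sqrt_comb:
  fixes a b X Y :: real
  assumes "a \<ge> 0" "b \<ge> 0" "X \<ge> 0" "Y \<ge> 0"
  shows "a * sqrt X + b * sqrt Y \<le> sqrt 2 * sqrt (a\<^sup>2 * X + b\<^sup>2 * Y)"
proof -
  have "(a * sqrt X + b * sqrt Y)\<^sup>2 \<le> 2 * (a\<^sup>2 * X + b\<^sup>2 * Y)"
  proof -
    have "(a * sqrt X + b * sqrt Y)\<^sup>2 + (a * sqrt X - b * sqrt Y)\<^sup>2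
          = 2 * ((a * sqrt X)\<^sup>2 + (b * sqrt Y)\<^sup>2)" by (simp add: power2_eq_square algebra_simps)
    moreover have "(a * sqrt X)\<^sup>2 = a\<^sup>2 * X" "(b * sqrt Y)\<^sup>2 = b\<^sup>2 * Y"
      using assms by (simp_all add: power_mult_distrib)
    ultimately show ?thesis by (smt (verit) zero_le_power2)
  qed
  hence "sqrt ((a * sqrt X + b * sqrt Y)\<^sup>2) \<le> sqrt (2 * (a\<^sup>2 * X + b\<^sup>2 * Y))"
    using real_sqrt_le_mono by blast
  thus ?thesis using assms by (simp add: real_sqrt_mult[symmetric])
qed

lemma mediant:
  fixes a b N0 N1 D0 D1 :: real
  assumes "a \<ge> 0" "b \<ge> 0" "a + b = 1" "D0 > 0" "D1 > 0"
  shows "min (N0/D0) (N1/D1) \<le> (a * N1 + b * N0) / (a * D1 + b * D0)"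
proof -
  define m where "m = min (N0/D0) (N1/D1)"
  have "m * D0 \<le> N0" using assms unfolding m_def
    by (metis min.cobounded1 pos_le_divide_eq)
  moreover have "m * D1 \<le> N1" using assms unfolding m_def
    by (metis min.cobounded2 pos_le_divide_eq)
  ultimately have "m * (a * D1 + b * D0) \<le> a * N1 + b * N0"
    using assms by (smt (verit) mult_left_mono distrib_left mult.commute mult.left_commute)
  moreover have "a * D1 + b * D0 > 0" using assms
    by (smt (verit) mult_nonneg_nonneg mult_pos_pos)
  ultimately show ?thesis unfolding m_def by (simp add: pos_le_divide_eq)
qed

theorem mainTheorem3:
  fixes t ns nb K Pi :: nat and \<epsilon> \<delta> \<alpha> \<Delta> :: real
  assumes "t > 0" "ns > 0" "nb > 0" "K > 0" "Pi > 0"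
    and "0 < \<epsilon>" "\<epsilon> \<le> 1" "0 < \<delta>" "\<delta> < 1" "\<alpha> > 0" "\<Delta> \<ge> 0"
  shows "min (Gt K Pi ns nb t \<epsilon> \<delta> 0 \<alpha> \<Delta>) (Gt K Pi ns nb t \<epsilon> \<delta> 1 \<alpha> \<Delta>)
         \<le> sqrt 2 * (INF lam\<in>{0..1}. Gt K Pi ns nb t \<epsilon> \<delta> lam \<alpha> \<Delta>)"
proof -
  define L where "L = Lconst nb Pi \<delta>"
  have "8 * real nb * real Pi / \<delta> > 1"
  proof -
    have "real nb \<ge> 1" "real Pi \<ge> 1" using assms by auto
    hence "8 * real nb * real Pi \<ge> 1"
      by (metis dual_order.trans mult_left_mono mult_right_mono mult.right_neutral numeral_One one_le_numeral le_numeral_extra(4) zero_le_one)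
    hence "8 * real nb * real Pi > \<delta>" using assms by linarith
    thus ?thesis using assms by simp
  qed
  hence L0: "L > 0" unfolding L_def Lconst_def by simp
  define X where "X = real K * real t / \<epsilon> * L"
  define Y where "Y = real ns * L"
  have X0: "X \<ge> 0" and Y0: "Y \<ge> 0" using L0 assms unfolding X_def Y_def by auto
  define N0 where "N0 = real ns * \<Delta> + 4 * sqrt Y + 2 * L"
  define N1 where "N1 = 4 * sqrt X + 2 * (real K / \<epsilon>) * L"
  define D0 where "D0 = real ns * \<alpha>"
  define D1 where "D1 = real t"
  have D0p: "D0 > 0" and D1p: "D1 > 0" using assms unfolding D0_def D1_def by auto
  have G0: "Gt K Pi ns nb t \<epsilon> \<delta> 0 \<alpha> \<Delta> = N0 / D0"
    unfolding Gt_def Vt_def Let_def L_def[symmetric] N0_def D0_def Y_def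
    by (simp add: algebra_simps)
  have G1: "Gt K Pi ns nb t \<epsilon> \<delta> 1 \<alpha> \<Delta> = N1 / D1"
    unfolding Gt_def Vt_def Let_def L_def[symmetric] N1_def D1_def X_def
    by (simp add: algebra_simps)
  have s2: "sqrt 2 \<ge> (1::real)" by simp
  have key: "min (N0/D0) (N1/D1) / sqrt 2 \<le> Gt K Pi ns nb t \<epsilon> \<delta> lam \<alpha> \<Delta>"
    if lam: "lam \<in> {0..1}" for lam
  proof -
    define a where "a = lam"
    define b where "b = 1 - lam"
    have a0: "a \<ge> 0" and b0: "b \<ge> 0" and ab: "a + b = 1" using lam unfolding a_def b_def by auto
    define D where "D = a * D1 + b * D0"
    have Dp: "D > 0" unfolding D_def using a0 b0 ab D0p D1p
      by (smt (verit) mult_nonneg_nonneg mult_pos_pos)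
    define S where "S = sqrt (a\<^sup>2 * X + b\<^sup>2 * Y)"
    have GS: "Gt K Pi ns nb t \<epsilon> \<delta> lam \<alpha> \<Delta> =
       (b * real ns * \<Delta> + 4 * S + 2 * (a * real K / \<epsilon> + b) * L) / D"
    proof -
      have "(lam\<^sup>2 * real K * real t / \<epsilon> + (1 - lam)\<^sup>2 * real ns) * L = a\<^sup>2 * X + b\<^sup>2 * Y"
        unfolding a_def b_def X_def Y_def by (simp add: algebra_simps)
      thus ?thesis unfolding Gt_def Vt_def Let_def L_def[symmetric] S_def D_def D0_def D1_def
        by (simp add: a_def b_def algebra_simps)
    qed
    have sc: "a * sqrt X + b * sqrt Y \<le> sqrt 2 * S"
      unfolding S_def using sqrt_comb a0 b0 X0 Y0 by blast
    have t1: "b * real ns * \<Delta> \<le> sqrt 2 * (b * real ns * \<Delta>)"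
    proof -
      have "b * real ns * \<Delta> \<ge> 0" using b0 assms by simp
      thus ?thesis using s2 by (simp add: mult_le_cancel_right1)
    qed
    have t2: "2 * (a * real K / \<epsilon> + b) * L \<le> sqrt 2 * (2 * (a * real K / \<epsilon> + b) * L)"
    proof -
      have "a * real K / \<epsilon> \<ge> 0" using a0 assms by simp
      hence "2 * (a * real K / \<epsilon> + b) * L \<ge> 0" using b0 L0 by simp
      thus ?thesis using s2 by (simp add: mult_le_cancel_right1 del: times_divide_eq_right)
    qed
    have num: "a * N1 + b * N0 \<le> sqrt 2 * (b * real ns * \<Delta> + 4 * S + 2 * (a * real K / \<epsilon> + b) * L)"
    proof -
      have "a * N1 + b * N0 = b * real ns * \<Delta> + 4 * (a * sqrt X + b * sqrt Y) + 2 * (a * real K / \<epsilon> + b) * L"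
        unfolding N0_def N1_def by (simp add: algebra_simps)
      also have "\<dots> \<le> sqrt 2 * (b * real ns * \<Delta>) + 4 * (sqrt 2 * S) + sqrt 2 * (2 * (a * real K / \<epsilon> + b) * L)"
        by (rule add_mono[OF add_mono[OF t1 mult_left_mono[OF sc]] t2]) simp
      finally show ?thesis by (simp add: algebra_simps)
    qed
    have "min (N0/D0) (N1/D1) \<le> (a * N1 + b * N0) / D"
      unfolding D_def using mediant a0 b0 ab D0p D1p by blast
    also have "\<dots> \<le> sqrt 2 * (b * real ns * \<Delta> + 4 * S + 2 * (a * real K / \<epsilon> + b) * L) / D"
      using num Dp by (simp add: divide_right_mono)
    finally have "min (N0/D0) (N1/D1) \<le> sqrt 2 * Gt K Pi ns nb t \<epsilon> \<delta> lam \<alpha> \<Delta>"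
      using GS by simp
    thus ?thesis by (simp add: pos_divide_le_eq mult.commute)
  qed
  have "min (N0/D0) (N1/D1) / sqrt 2 \<le> (INF lam\<in>{0..1}. Gt K Pi ns nb t \<epsilon> \<delta> lam \<alpha> \<Delta>)"
    by (rule cINF_greatest) (use key in auto)
  thus ?thesis using G0 G1 by (simp add: pos_divide_le_eq mult.commute)
qed

end
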